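(* Let $n\ge1$, $d\in\mathbb{R}$ and $\varepsilon,\theta\in(0,1)$. There is a constant $\rho_0>0$ depending only on $n,d,\varepsilon,\theta$ such that for every $\rho\ge\rho_0$, $$\varepsilon(\rho+|x|^2)^{d/2}\le\mathcal{B}\big[(\rho+|\cdot|^2)^{d/2}\big](x)\le\theta^{-1}(\rho+|x|^2)^{d/2}\qquad(x\in\mathbb{R}^n).$$ Moreover, $\rho_0$ stays bounded when $d$ ranges over a bounded set.
   Context: $\mathcal{B}=(I-\Delta)^{-1}$ on $\mathbb{R}^n$, i.e. $\mathcal{B}\varphi=B*\varphi$ with $B=\mathcal{F}^{-1}((1+|\xi|^2)^{-1})$. *)

theory Defs
  imports "HOL-Analysis.Analysis"
begin

text \<open>Bessel kernel B = inverse Fourier transform of (1+|xi|^2)^(-1) on R^n,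
  given by its standard heat-kernel (subordination) representation
  B(x) = int_0^infty (4 pi t)^(-n/2) exp(-t - |x|^2/(4t)) dt, with n = DIM('a).\<close>
definition bessel_kernel :: "'a::euclidean_space \<Rightarrow> real" where
  "bessel_kernel x =
     (LBINT t:{0<..}. (4 * pi * t) powr (- real DIM('a) / 2) * exp (- t - (norm x)\<^sup>2 / (4 * t)))"

text \<open>The operator (I - Laplacian)^(-1): convolution with the Bessel kernel.\<close>
definition bessel_op :: "('a::euclidean_space \<Rightarrow> real) \<Rightarrow> 'a \<Rightarrow> real" where
  "bessel_op \<phi> x = (\<integral>y. bessel_kernel (x - y) * \<phi> y \<partial>lborel)"

end

theory Submission
  imports Defs "HOL-Probability.Distributions"
begin

lemma gauss1:
  fixes t :: real assumes t: "t > 0"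
  shows "(\<integral>\<^sup>+x. ennreal (exp (- x\<^sup>2 / (4*t))) \<partial>lborel) = ennreal (sqrt (4*pi*t))"
proof -
  let ?s = "sqrt (2*t)"
  have nd: "normal_density 0 ?s x = exp (- x\<^sup>2 / (4*t)) / sqrt (4*pi*t)" for x
    using t by (simp add: normal_density_def real_sqrt_mult power_mult_distrib)
  have "(\<integral>\<^sup>+x. ennreal (normal_density 0 ?s x) \<partial>lborel) = ennreal 1"
  proof -
    have s: "0 < sqrt (2*t)" using t by simp
    have i: "integrable lborel (normal_density 0 (sqrt(2*t)))" using integrable_normal_density[OF s] .
    have j: "integral\<^sup>L lborel (normal_density 0 (sqrt(2*t))) = 1" using integral_normal_density[OF s] .
    show ?thesis by (subst nn_integral_eq_integral[OF i]) (simp_all only: j normal_density_nonneg AE_I2)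
  qed
  then have 1: "(\<integral>\<^sup>+x. ennreal (exp (- x\<^sup>2 / (4*t)) / sqrt (4*pi*t)) \<partial>lborel) = 1"
    by (simp add: nd)
  have "(\<integral>\<^sup>+x. ennreal (exp (- x\<^sup>2 / (4*t))) \<partial>lborel)
      = (\<integral>\<^sup>+x. ennreal (sqrt (4*pi*t)) * ennreal (exp (- x\<^sup>2 / (4*t)) / sqrt (4*pi*t)) \<partial>lborel)"
    using t by (intro nn_integral_cong) (simp add: ennreal_mult'[symmetric])
  also have "\<dots> = ennreal (sqrt (4*pi*t))"
    by (subst nn_integral_cmult, simp, subst 1, simp)
  finally show ?thesis .
qed

lemma gaussn:
  fixes t :: real assumes t: "t > 0"
  shows "(\<integral>\<^sup>+x. ennreal (exp (- (norm (x::'a::euclidean_space))\<^sup>2 / (4*t))) \<partial>lborel)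
     = ennreal ((4*pi*t) powr (real DIM('a) / 2))"
proof -
  have eq: "ennreal (exp (- (norm x)\<^sup>2 / (4*t))) = (\<Prod>b\<in>Basis. ennreal (exp (- (x \<bullet> b)\<^sup>2 / (4*t))))" for x :: 'a
  proof -
    have "(norm x)\<^sup>2 = (\<Sum>b\<in>Basis. (x \<bullet> b)\<^sup>2)"
      by (simp only: power2_norm_eq_inner, subst euclidean_inner, simp add: power2_eq_square)
    then have "exp (- (norm x)\<^sup>2 / (4*t)) = (\<Prod>b\<in>Basis. exp (- (x \<bullet> b)\<^sup>2 / (4*t)))"
      by (simp add: exp_sum[symmetric] sum_divide_distrib[symmetric] sum_negf)
    then show ?thesis by (simp add: prod_ennreal)
  qed
  have "(\<integral>\<^sup>+x. ennreal (exp (- (norm (x::'a))\<^sup>2 / (4*t))) \<partial>lborel)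
     = (\<Prod>b\<in>(Basis::'a set). (\<integral>\<^sup>+x. ennreal (exp (- x\<^sup>2 / (4*t))) \<partial>lborel))"
    unfolding eq by (rule nn_integral_lborel_prod) auto
  also have "\<dots> = ennreal (sqrt (4*pi*t) ^ DIM('a))"
    by (subst gauss1[OF t], simp, rule ennreal_power, insert t, simp)
  also have "sqrt (4*pi*t) ^ DIM('a) = (4*pi*t) powr (real DIM('a) / 2)"
  proof -
    have p: "0 < 4*pi*t" using t by simp
    have "sqrt (4*pi*t) ^ DIM('a) = ((4*pi*t) powr (1/2)) ^ DIM('a)"
      using p by (simp add: powr_half_sqrt)
    also have "\<dots> = ((4*pi*t) powr (1/2)) powr (real DIM('a))"
      using p by (subst powr_realpow) auto
    also have "\<dots> = (4*pi*t) powr (real DIM('a) / 2)"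
      by (simp add: powr_powr)
    finally show ?thesis .
  qed
  finally show ?thesis .
qed

definition gk :: "real \<Rightarrow> 'a::euclidean_space \<Rightarrow> real" where
  "gk t z = indicator {0<..} t * ((4*pi*t) powr (- real DIM('a) / 2) * exp (- t - (norm z)\<^sup>2 / (4*t)))"

lemma gk_nonneg: "0 \<le> gk t z"
  by (simp add: gk_def)

lemma gk_meas[measurable]: "(\<lambda>(t,z). gk t (z::'a::euclidean_space)) \<in> borel_measurable (lborel \<Otimes>\<^sub>M (lborel :: 'a measure))"
  unfolding gk_def by measurable

lemma gk_meas2[measurable]: "(\<lambda>t. gk t z) \<in> borel_measurable lborel"
  unfolding gk_def by measurable

lemma bk_eq: "bessel_kernel z = enn2real (\<integral>\<^sup>+ t. ennreal (gk t z) \<partial>lborel)"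
proof -
  have "(\<lambda>t. indicator {0<..} t *\<^sub>R ((4 * pi * t) powr (- real DIM('a) / 2) * exp (- t - (norm z)\<^sup>2 / (4 * t))))
     = (\<lambda>t. gk t z)" by (simp add: gk_def fun_eq_iff)
  then show ?thesis
    unfolding bessel_kernel_def set_lebesgue_integral_def
    by (simp add: integral_eq_nn_integral gk_nonneg)
qed

lemma K_fub:
  assumes [measurable]: "\<phi> \<in> borel_measurable (lborel :: 'a::euclidean_space measure)" and nn: "\<And>z. 0 \<le> \<phi> z"
  shows "(\<integral>\<^sup>+ z. (\<integral>\<^sup>+ t. ennreal (gk t z) \<partial>lborel) * ennreal (\<phi> z) \<partial>lborel)
       = (\<integral>\<^sup>+ t. (\<integral>\<^sup>+ z. ennreal (gk t z * \<phi> z) \<partial>lborel) \<partial>lborel)"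
proof -
  have "(\<integral>\<^sup>+ z. (\<integral>\<^sup>+ t. ennreal (gk t z) \<partial>lborel) * ennreal (\<phi> z) \<partial>lborel)
      = (\<integral>\<^sup>+ z. (\<integral>\<^sup>+ t. ennreal (gk t z * \<phi> z) \<partial>lborel) \<partial>lborel)"
    apply (intro nn_integral_cong)
    apply (subst nn_integral_multc[symmetric])
     apply measurable
    apply (intro nn_integral_cong)
    apply (simp add: ennreal_mult gk_nonneg nn)
    done
  also have "\<dots> = (\<integral>\<^sup>+ t. (\<integral>\<^sup>+ z. ennreal (gk t z * \<phi> z) \<partial>lborel) \<partial>lborel)"
    by (rule lborel_pair.Fubini') measurable
  finally show ?thesis .
qed

lemma translate_nn:
  fixes x :: "'a::euclidean_space"
  assumes [measurable]: "h \<in> borel_measurable (lborel :: 'a measure)"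
  shows "(\<integral>\<^sup>+ y. h (x - y) \<partial>lborel) = (\<integral>\<^sup>+ z. h z \<partial>lborel)"
proof -
  have eq: "(lborel::'a measure) = density (distr lborel borel (\<lambda>y. x + (-1::real) *\<^sub>R y)) (\<lambda>_. \<bar>-1::real\<bar>^DIM('a))"
    by (rule lborel_affine) simp
  have "(\<integral>\<^sup>+ z. h z \<partial>lborel) = (\<integral>\<^sup>+ z. h z \<partial>(density (distr lborel borel (\<lambda>y. x + (-1::real) *\<^sub>R y)) (\<lambda>_. \<bar>-1::real\<bar>^DIM('a))))"
    using arg_cong[OF eq, of "\<lambda>M. integral\<^sup>N M h"] .
  also have "\<dots> = (\<integral>\<^sup>+ y. h (x - y) \<partial>lborel)"
    by (simp add: nn_integral_density nn_integral_distr)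
  finally show ?thesis by simp
qed

lemma gk_pos_eq: "t > 0 \<Longrightarrow> gk t z = ((4*pi*t) powr (- real DIM('a) / 2) * exp (- t)) * exp (- (norm (z::'a::euclidean_space))\<^sup>2 / (4*t))"
proof -
  assume t: "t > 0"
  have e: "exp (- t - (norm z)\<^sup>2 / (4*t)) = exp (- t) * exp (- (norm z)\<^sup>2 / (4*t))"
    by (subst exp_add[symmetric]) simp
  show ?thesis unfolding gk_def e using t by simp
qed

lemma inner1:
  assumes t: "t > 0"
  shows "(\<integral>\<^sup>+ z. ennreal (gk t (z::'a::euclidean_space) * 1) \<partial>lborel) = ennreal (exp (- t))"
proof -
  let ?c = "(4*pi*t) powr (- real DIM('a) / 2) * exp (- t)"
  have "(\<integral>\<^sup>+ z. ennreal (gk t (z::'a) * 1) \<partial>lborel)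
      = (\<integral>\<^sup>+ z. ennreal ?c * ennreal (exp (- (norm (z::'a))\<^sup>2 / (4*t))) \<partial>lborel)"
    using t by (intro nn_integral_cong) (simp add: gk_pos_eq ennreal_mult)
  also have "\<dots> = ennreal ?c * ennreal ((4*pi*t) powr (real DIM('a) / 2))"
  proof -
    have m: "(\<lambda>z::'a. ennreal (exp (- (norm z)\<^sup>2 / (4*t)))) \<in> borel_measurable lborel" by measurable
    show ?thesis by (simp only: nn_integral_cmult[OF m] gaussn[OF t])
  qed
  also have "\<dots> = ennreal (?c * (4*pi*t) powr (real DIM('a) / 2))"
    by (rule ennreal_mult[symmetric]) auto
  also have "?c * (4*pi*t) powr (real DIM('a) / 2) = exp (- t)"
    using t by (simp add: powr_add[symmetric] mult.commute mult.left_commute)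
  finally show ?thesis .
qed

lemma inner2:
  assumes t: "t > 0"
  shows "(\<integral>\<^sup>+ z. ennreal (gk t (z::'a::euclidean_space) * exp (norm z / 4)) \<partial>lborel)
     \<le> ennreal (2 powr (real DIM('a) / 2) * exp (- (7/8 * t)))"
proof -
  let ?c = "(4*pi*t) powr (- real DIM('a) / 2) * exp (- t)"
  have t2: "2*t > 0" using t by simp
  have pt: "exp (- (norm z)\<^sup>2 / (4*t)) * exp (norm z / 4) \<le> exp (t/8) * exp (- (norm z)\<^sup>2 / (4*(2*t)))" for z :: 'a
  proof -
    have d: "(t/8 + - (norm z)\<^sup>2 / (4*(2*t))) - (- (norm z)\<^sup>2 / (4*t) + norm z / 4) = (t - norm z)\<^sup>2 / (8*t)"
      using t by (simp add: field_simps power2_eq_square)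
    have "0 \<le> (t - norm z)\<^sup>2 / (8*t)" using t by simp
    then have "- (norm z)\<^sup>2 / (4*t) + norm z / 4 \<le> t/8 + - (norm z)\<^sup>2 / (4*(2*t))"
      using d by linarith
    then show ?thesis by (simp add: exp_add[symmetric])
  qed
  have "(\<integral>\<^sup>+ z. ennreal (gk t (z::'a) * exp (norm z / 4)) \<partial>lborel)
      \<le> (\<integral>\<^sup>+ z. ennreal (?c * exp (t/8)) * ennreal (exp (- (norm (z::'a))\<^sup>2 / (4*(2*t)))) \<partial>lborel)"
  proof (intro nn_integral_mono)
    fix z :: 'a
    have "gk t z * exp (norm z / 4) = ?c * (exp (- (norm z)\<^sup>2 / (4*t)) * exp (norm z / 4))"
      using t by (simp add: gk_pos_eq)
    also have "\<dots> \<le> ?c * (exp (t/8) * exp (- (norm z)\<^sup>2 / (4*(2*t))))"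
      by (intro mult_left_mono pt) simp
    finally show "ennreal (gk t z * exp (norm z / 4)) \<le> ennreal (?c * exp (t/8)) * ennreal (exp (- (norm z)\<^sup>2 / (4*(2*t))))"
      by (simp add: ennreal_mult[symmetric] mult.assoc)
  qed
  also have "\<dots> = ennreal (?c * exp (t/8)) * ennreal ((4*pi*(2*t)) powr (real DIM('a) / 2))"
  proof -
    have m: "(\<lambda>z::'a. ennreal (exp (- (norm z)\<^sup>2 / (4*(2*t))))) \<in> borel_measurable lborel" by measurable
    show ?thesis by (simp only: nn_integral_cmult[OF m] gaussn[OF t2])
  qed
  also have "\<dots> = ennreal (?c * exp (t/8) * (4*pi*(2*t)) powr (real DIM('a) / 2))"
    by (rule ennreal_mult[symmetric]) auto
  also have "?c * exp (t/8) * (4*pi*(2*t)) powr (real DIM('a) / 2) = 2 powr (real DIM('a) / 2) * exp (- (7/8 * t))"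
  proof -
    have A: "(4*pi*(2*t)) powr (real DIM('a) / 2) = 2 powr (real DIM('a) / 2) * (4*pi*t) powr (real DIM('a) / 2)"
      using t by (simp add: powr_mult[symmetric] mult_ac)
    have B: "(4*pi*t) powr (- real DIM('a) / 2) * (4*pi*t) powr (real DIM('a) / 2) = 1"
      using t by (simp add: powr_add[symmetric])
    have C: "exp (- t) * exp (t/8) = exp (- (7/8 * t))"
      by (simp add: exp_add[symmetric])
    have "?c * exp (t/8) * (4*pi*(2*t)) powr (real DIM('a) / 2)
       = 2 powr (real DIM('a) / 2) * ((4*pi*t) powr (- real DIM('a) / 2) * (4*pi*t) powr (real DIM('a) / 2)) * (exp (- t) * exp (t/8))"
      unfolding A by (simp only: mult_ac)
    also have "\<dots> = 2 powr (real DIM('a) / 2) * exp (- (7/8 * t))"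
      unfolding B C by simp
    finally show ?thesis .
  qed
  finally show ?thesis .
qed

lemma intexp:
  fixes c :: real assumes c: "c > 0"
  shows "(\<integral>\<^sup>+ t. ennreal (indicator {0<..} t * exp (- (c * t))) \<partial>lborel) = ennreal (1 / c)"
proof -
  let ?f = "\<lambda>x::real. ennreal (x^0 * exp (-x)) * indicator {0 ..} x"
  have 1: "(\<integral>\<^sup>+x. ?f x \<partial>lborel) = 1"
    using nn_intergal_power_times_exp_Ici[of 0] by simp
  have "(\<integral>\<^sup>+x. ?f x \<partial>lborel) = \<bar>c\<bar> * (\<integral>\<^sup>+x. ?f (0 + c * x) \<partial>lborel)"
    by (rule nn_integral_real_affine) (use c in auto)
  also have "(\<integral>\<^sup>+x. ?f (0 + c * x) \<partial>lborel) = (\<integral>\<^sup>+ t. ennreal (indicator {0<..} t * exp (- (c * t))) \<partial>lborel)"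
    apply (rule nn_integral_cong_AE)
    using AE_lborel_singleton[of 0]
    apply eventually_elim
    using c by (auto simp: indicator_def zero_le_mult_iff)
  finally have eq: "ennreal c * (\<integral>\<^sup>+ t. ennreal (indicator {0<..} t * exp (- (c * t))) \<partial>lborel) = 1"
    using 1 c by simp
  define X where "X = (\<integral>\<^sup>+ t. ennreal (indicator {0<..} t * exp (- (c * t))) \<partial>lborel)"
  have eqX: "ennreal c * X = 1" using eq unfolding X_def .
  have "X = (ennreal (1/c) * ennreal c) * X"
    using c by (simp add: ennreal_mult[symmetric])
  also have "\<dots> = ennreal (1/c) * (ennreal c * X)" by (simp only: mult.assoc)
  also have "\<dots> = ennreal (1/c)" by (simp only: eqX mult_1_right)
  finally show ?thesis unfolding X_def .
qed

lemma ratio_bound: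
  fixes r u d D :: real
  assumes r: "r > 0" and u: "u \<ge> 0" and r1: "r \<le> 1 + u" and r2: "1 / (1 + u) \<le> r" and d: "\<bar>d\<bar> \<le> D"
  shows "r powr d \<le> exp (D * u)" and "1 - D * u \<le> r powr d"
proof -
  have "ln r \<le> ln (1 + u)" using r r1 by simp
  moreover have "1 / r \<le> 1 + u" using r r2 u by (simp add: field_simps)
  then have "ln (1 / r) \<le> ln (1 + u)" using r u by (subst ln_le_cancel_iff) auto
  then have "- ln r \<le> ln (1 + u)" using r by (simp add: ln_div)
  moreover have "ln (1 + u) \<le> u" using u by (simp add: ln_add_one_self_le_self)
  ultimately have lr: "\<bar>ln r\<bar> \<le> u" by linarith
  have "\<bar>d * ln r\<bar> \<le> D * u"
    using lr d by (simp add: abs_mult mult_mono)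
  then have a: "d * ln r \<le> D * u" and b: "- (D * u) \<le> d * ln r" by linarith+
  have rp: "r powr d = exp (d * ln r)" using r by (simp add: powr_def)
  show "r powr d \<le> exp (D * u)" unfolding rp using a by simp
  have "1 - D * u \<le> exp (- (D * u))" using exp_ge_add_one_self[of "- (D * u)"] by simp
  also have "\<dots> \<le> exp (d * ln r)" using b by simp
  finally show "1 - D * u \<le> r powr d" unfolding rp .
qed

lemma exp_le_aux: "(a::real) \<ge> 0 \<Longrightarrow> exp a \<le> 1 + a * exp a"
proof -
  assume a: "a \<ge> 0"
  have "1 - a \<le> exp (- a)" using exp_ge_add_one_self[of "- a"] by simp
  then have "(1 - a) * exp a \<le> exp (- a) * exp a" by (simp add: mult_right_mono)
  also have "\<dots> = 1" by (simp add: exp_minus)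
  finally show ?thesis by (simp add: algebra_simps)
qed

lemma s_le_exp: "(s::real) \<ge> 0 \<Longrightarrow> s \<le> 8 * exp (s / 8)"
  using exp_ge_add_one_self[of "s/8"] by linarith

lemma pt_bound:
  fixes x y :: "'a::euclidean_space" and \<rho> d D :: real
  assumes \<rho>: "\<rho> > 0" and d: "\<bar>d\<bar> \<le> D" and D8: "8 * D \<le> sqrt \<rho>"
  shows "(\<rho> + (norm y)\<^sup>2) powr (d / 2) \<le> (\<rho> + (norm x)\<^sup>2) powr (d / 2) * (1 + 8 * D / sqrt \<rho> * exp (norm (x - y) / 4))"
    and "(\<rho> + (norm x)\<^sup>2) powr (d / 2) * (1 - 8 * D / sqrt \<rho> * exp (norm (x - y) / 4)) \<le> (\<rho> + (norm y)\<^sup>2) powr (d / 2)"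
proof -
  define p where "p = sqrt (\<rho> + (norm x)\<^sup>2)"
  define q where "q = sqrt (\<rho> + (norm y)\<^sup>2)"
  define s where "s = norm (x - y)"
  define u where "u = s / sqrt \<rho>"
  have D0: "D \<ge> 0" using d by linarith
  have sr: "sqrt \<rho> > 0" using \<rho> by simp
  have s0: "s \<ge> 0" unfolding s_def by simp
  have u0: "u \<ge> 0" unfolding u_def using s0 sr by simp
  have pn: "p = norm (sqrt \<rho>, x)" unfolding p_def using \<rho> by (simp add: norm_Pair)
  have qn: "q = norm (sqrt \<rho>, y)" unfolding q_def using \<rho> by (simp add: norm_Pair)
  have "\<bar>p - q\<bar> \<le> norm ((sqrt \<rho>, x) - (sqrt \<rho>, y))"
    unfolding pn qn by (rule norm_triangle_ineq3)
  also have "norm ((sqrt \<rho>, x) - (sqrt \<rho>, y)) = s"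
    unfolding s_def by (simp add: norm_Pair)
  finally have pq: "\<bar>p - q\<bar> \<le> s" .
  have pr: "p \<ge> sqrt \<rho>" unfolding p_def using \<rho> by simp
  have qr: "q \<ge> sqrt \<rho>" unfolding q_def using \<rho> by simp
  have p0: "p > 0" using pr sr by linarith
  have q0: "q > 0" using qr sr by linarith
  have "s \<le> p * u"
  proof -
    have "s * sqrt \<rho> \<le> s * p" using pr s0 by (simp add: mult_left_mono)
    then show ?thesis unfolding u_def using sr by (simp add: field_simps)
  qed
  then have "q \<le> p * (1 + u)" using pq by (simp add: algebra_simps)
  then have r1: "q / p \<le> 1 + u" using p0 by (simp add: divide_le_eq mult.commute)
  have "s \<le> q * u"
  proof -
    have "s * sqrt \<rho> \<le> s * q" using qr s0 by (simp add: mult_left_mono)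
    then show ?thesis unfolding u_def using sr by (simp add: field_simps)
  qed
  then have "p \<le> q * (1 + u)" using pq by (simp add: algebra_simps)
  then have r2: "1 / (1 + u) \<le> q / p" using p0 q0 u0 by (simp add: field_simps)
  have rpos: "q / p > 0" using p0 q0 by simp
  note rb = ratio_bound[OF rpos u0 r1 r2 d]
  have Yq: "(\<rho> + (norm y)\<^sup>2) powr (d / 2) = q powr d"
  proof -
    have "q powr d = ((\<rho> + (norm y)\<^sup>2) powr (1/2)) powr d"
      unfolding q_def using \<rho> by (simp add: powr_half_sqrt)
    also have "\<dots> = (\<rho> + (norm y)\<^sup>2) powr (d / 2)" by (simp add: powr_powr)
    finally show ?thesis by simp
  qed
  have Xp: "(\<rho> + (norm x)\<^sup>2) powr (d / 2) = p powr d"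
  proof -
    have "p powr d = ((\<rho> + (norm x)\<^sup>2) powr (1/2)) powr d"
      unfolding p_def using \<rho> by (simp add: powr_half_sqrt)
    also have "\<dots> = (\<rho> + (norm x)\<^sup>2) powr (d / 2)" by (simp add: powr_powr)
    finally show ?thesis by simp
  qed
  have qpr: "q powr d = p powr d * (q / p) powr d"
    using p0 q0 by (simp add: powr_divide)
  have P0: "p powr d > 0" using p0 by simp
  have Du: "D * u = D / sqrt \<rho> * s" unfolding u_def by simp
  have Du8: "D * u \<le> s / 8"
  proof -
    have "D * s \<le> sqrt \<rho> / 8 * s" using D8 s0 by (intro mult_right_mono) auto
    then show ?thesis unfolding u_def using sr by (simp add: field_simps)
  qed
  have Dsr: "D / sqrt \<rho> \<ge> 0" using D0 sr by simp
  have es: "exp (s/8) * exp (s/8) = exp (s/4)" by (simp add: exp_add[symmetric])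
  have key1: "D * u \<le> 8 * D / sqrt \<rho> * exp (s / 4)"
  proof -
    have "D * u \<le> D / sqrt \<rho> * (8 * exp (s/8))"
      unfolding Du by (rule mult_left_mono[OF s_le_exp[OF s0] Dsr])
    also have "\<dots> \<le> D / sqrt \<rho> * (8 * exp (s/4))"
      using Dsr s0 by (intro mult_left_mono) auto
    finally show ?thesis by (simp add: mult_ac)
  qed
  have key2: "exp (D * u) \<le> 1 + 8 * D / sqrt \<rho> * exp (s / 4)"
  proof -
    have "exp (D * u) \<le> 1 + D * u * exp (D * u)"
      using D0 u0 by (intro exp_le_aux) simp
    also have "D * u * exp (D * u) \<le> (D / sqrt \<rho> * (8 * exp (s/8))) * exp (s/8)"
    proof (rule mult_mono)
      show "D * u \<le> D / sqrt \<rho> * (8 * exp (s / 8))"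
        unfolding Du by (rule mult_left_mono[OF s_le_exp[OF s0] Dsr])
      show "exp (D * u) \<le> exp (s / 8)" using Du8 by simp
    qed (use Dsr D0 sr in auto)
    also have "(D / sqrt \<rho> * (8 * exp (s/8))) * exp (s/8) = 8 * D / sqrt \<rho> * exp (s / 4)"
      using es by (simp add: mult_ac)
    finally show ?thesis by simp
  qed
  show "(\<rho> + (norm y)\<^sup>2) powr (d / 2) \<le> (\<rho> + (norm x)\<^sup>2) powr (d / 2) * (1 + 8 * D / sqrt \<rho> * exp (norm (x - y) / 4))"
    unfolding Yq Xp qpr s_def[symmetric]
    using rb(1) key2 P0 by (intro mult_left_mono) auto
  show "(\<rho> + (norm x)\<^sup>2) powr (d / 2) * (1 - 8 * D / sqrt \<rho> * exp (norm (x - y) / 4)) \<le> (\<rho> + (norm y)\<^sup>2) powr (d / 2)"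
    unfolding Yq Xp qpr s_def[symmetric]
    using rb(2) key1 P0 by (intro mult_left_mono) auto
qed

lemma gk_zero: "\<not> t > 0 \<Longrightarrow> gk t z = 0"
  by (simp add: gk_def)

lemma gk_meas'[measurable]: "(\<lambda>(z,t). gk t (z::'a::euclidean_space)) \<in> borel_measurable ((lborel :: 'a measure) \<Otimes>\<^sub>M lborel)"
  unfolding gk_def by measurable

lemma K_meas[measurable]: "(\<lambda>z. \<integral>\<^sup>+ t. ennreal (gk t z) \<partial>lborel) \<in> borel_measurable (lborel :: 'a::euclidean_space measure)"
  by measurable

lemma K_total: "(\<integral>\<^sup>+ z. (\<integral>\<^sup>+ t. ennreal (gk t (z::'a::euclidean_space)) \<partial>lborel) \<partial>lborel) = 1"
proof -
  have "(\<integral>\<^sup>+ z. (\<integral>\<^sup>+ t. ennreal (gk t (z::'a)) \<partial>lborel) \<partial>lborel)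
     = (\<integral>\<^sup>+ z. (\<integral>\<^sup>+ t. ennreal (gk t (z::'a)) \<partial>lborel) * ennreal ((\<lambda>_. 1) z) \<partial>lborel)" by simp
  also have "\<dots> = (\<integral>\<^sup>+ t. (\<integral>\<^sup>+ z. ennreal (gk t (z::'a) * 1) \<partial>lborel) \<partial>lborel)"
    by (rule K_fub) auto
  also have "\<dots> = (\<integral>\<^sup>+ t. ennreal (indicator {0<..} t * exp (- (1 * t))) \<partial>lborel)"
  proof (intro nn_integral_cong)
    fix t :: real
    show "(\<integral>\<^sup>+ z. ennreal (gk t (z::'a) * 1) \<partial>lborel) = ennreal (indicator {0<..} t * exp (- (1 * t)))"
    proof (cases "t > 0")
      case True then show ?thesis using inner1[OF True, where 'a='a] by simp
    next
      case False then show ?thesis by (simp add: gk_zero)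
    qed
  qed
  also have "\<dots> = 1" using intexp[of 1] by simp
  finally show ?thesis .
qed

lemma K_mom: "(\<integral>\<^sup>+ z. (\<integral>\<^sup>+ t. ennreal (gk t (z::'a::euclidean_space)) \<partial>lborel) * ennreal (exp (norm z / 4)) \<partial>lborel) < \<infinity>"
proof -
  have "(\<integral>\<^sup>+ z. (\<integral>\<^sup>+ t. ennreal (gk t (z::'a)) \<partial>lborel) * ennreal (exp (norm z / 4)) \<partial>lborel)
     = (\<integral>\<^sup>+ t. (\<integral>\<^sup>+ z. ennreal (gk t (z::'a) * exp (norm z / 4)) \<partial>lborel) \<partial>lborel)"
    by (rule K_fub) auto
  also have "\<dots> \<le> (\<integral>\<^sup>+ t. ennreal (2 powr (real DIM('a) / 2)) * ennreal (indicator {0<..} t * exp (- (7/8 * t))) \<partial>lborel)"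
  proof (intro nn_integral_mono)
    fix t :: real
    show "(\<integral>\<^sup>+ z. ennreal (gk t (z::'a) * exp (norm z / 4)) \<partial>lborel) \<le> ennreal (2 powr (real DIM('a) / 2)) * ennreal (indicator {0<..} t * exp (- (7/8 * t)))"
    proof (cases "t > 0")
      case True then show ?thesis using inner2[OF True, where 'a='a] by (simp add: ennreal_mult[symmetric])
    next
      case False then show ?thesis by (simp add: gk_zero)
    qed
  qed
  also have "\<dots> = ennreal (2 powr (real DIM('a) / 2)) * ennreal (1 / (7/8))"
  proof -
    have m: "(\<lambda>t. ennreal (indicator {0<..} t * exp (- (7/8 * t)))) \<in> borel_measurable lborel" by measurable
    have I: "(\<integral>\<^sup>+ t. ennreal (indicator {0<..} t * exp (- (7/8 * t))) \<partial>lborel) = ennreal (1 / (7/8))"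
      by (rule intexp) simp
    show ?thesis by (simp only: nn_integral_cmult[OF m] I)
  qed
  also have "\<dots> < \<infinity>" by (simp add: ennreal_mult_less_top)
  finally show ?thesis .
qed

lemma bk_meas[measurable]: "bessel_kernel \<in> borel_measurable (lborel :: 'a::euclidean_space measure)"
proof -
  have "bessel_kernel = (\<lambda>z::'a. enn2real (\<integral>\<^sup>+ t. ennreal (gk t z) \<partial>lborel))"
    by (simp add: bk_eq fun_eq_iff)
  moreover have "(\<lambda>z::'a. enn2real (\<integral>\<^sup>+ t. ennreal (gk t z) \<partial>lborel)) \<in> borel_measurable lborel"
    by measurable
  ultimately show ?thesis by simp
qed

lemma bk_nonneg: "0 \<le> bessel_kernel z"
  by (simp add: bk_eq)

lemma bk_AE: "AE z in lborel. ennreal (bessel_kernel (z::'a::euclidean_space)) = (\<integral>\<^sup>+ t. ennreal (gk t z) \<partial>lborel)"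
proof -
  have "AE z in lborel. (\<integral>\<^sup>+ t. ennreal (gk t (z::'a)) \<partial>lborel) \<noteq> \<infinity>"
    by (rule nn_integral_PInf_AE) (simp_all add: K_total)
  then show ?thesis
    by eventually_elim (simp add: bk_eq ennreal_enn2real_if)
qed

lemma bk_int1: "(\<integral>\<^sup>+ z. ennreal (bessel_kernel (z::'a::euclidean_space)) \<partial>lborel) = 1"
  using K_total[where 'a='a] by (subst nn_integral_cong_AE[OF bk_AE]) simp_all

lemma bk_int2: "(\<integral>\<^sup>+ z. ennreal (bessel_kernel (z::'a::euclidean_space) * exp (norm z / 4)) \<partial>lborel) < \<infinity>"
proof -
  have "(\<integral>\<^sup>+ z. ennreal (bessel_kernel (z::'a) * exp (norm z / 4)) \<partial>lborel)
     = (\<integral>\<^sup>+ z. (\<integral>\<^sup>+ t. ennreal (gk t (z::'a)) \<partial>lborel) * ennreal (exp (norm z / 4)) \<partial>lborel)"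
    apply (rule nn_integral_cong_AE)
    using bk_AE[where 'a='a] apply eventually_elim
    by (simp add: ennreal_mult bk_nonneg)
  then show ?thesis using K_mom[where 'a='a] by simp
qed

lemma bx1:
  fixes x :: "'a::euclidean_space"
  shows "integrable lborel (\<lambda>y. bessel_kernel (x - y))" and "(\<integral>y. bessel_kernel (x - y) \<partial>lborel) = 1"
proof -
  have nn: "(\<integral>\<^sup>+ y. ennreal (bessel_kernel (x - y)) \<partial>lborel) = 1"
    using translate_nn[of "\<lambda>z. ennreal (bessel_kernel z)" x] bk_int1[where 'a='a] by simp
  have m: "(\<lambda>y. bessel_kernel (x - y)) \<in> borel_measurable lborel" by measurable
  show "integrable lborel (\<lambda>y. bessel_kernel (x - y))"
    by (rule integrableI_nonneg[OF m]) (simp_all add: bk_nonneg nn)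
  show "(\<integral>y. bessel_kernel (x - y) \<partial>lborel) = 1"
    by (subst integral_eq_nn_integral[OF m]) (simp_all add: bk_nonneg nn)
qed

lemma bx2:
  fixes x :: "'a::euclidean_space"
  shows "integrable lborel (\<lambda>y. bessel_kernel (x - y) * exp (norm (x - y) / 4))"
    and "(\<integral>y. bessel_kernel (x - y) * exp (norm (x - y) / 4) \<partial>lborel)
        = enn2real (\<integral>\<^sup>+ z. ennreal (bessel_kernel (z::'a) * exp (norm z / 4)) \<partial>lborel)"
proof -
  have nn: "(\<integral>\<^sup>+ y. ennreal (bessel_kernel (x - y) * exp (norm (x - y) / 4)) \<partial>lborel)
     = (\<integral>\<^sup>+ z. ennreal (bessel_kernel (z::'a) * exp (norm z / 4)) \<partial>lborel)"
    using translate_nn[of "\<lambda>z. ennreal (bessel_kernel z * exp (norm z / 4))" x] by simp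
  have m: "(\<lambda>y. bessel_kernel (x - y) * exp (norm (x - y) / 4)) \<in> borel_measurable lborel" by measurable
  show "integrable lborel (\<lambda>y. bessel_kernel (x - y) * exp (norm (x - y) / 4))"
  proof (rule integrableI_nonneg[OF m])
    show "AE y in lborel. 0 \<le> bessel_kernel (x - y) * exp (norm (x - y) / 4)" by (simp add: bk_nonneg)
    show "(\<integral>\<^sup>+ y. ennreal (bessel_kernel (x - y) * exp (norm (x - y) / 4)) \<partial>lborel) < \<infinity>"
      unfolding nn by (rule bk_int2)
  qed
  show "(\<integral>y. bessel_kernel (x - y) * exp (norm (x - y) / 4) \<partial>lborel)
        = enn2real (\<integral>\<^sup>+ z. ennreal (bessel_kernel (z::'a) * exp (norm z / 4)) \<partial>lborel)"
    by (subst integral_eq_nn_integral[OF m]) (simp_all add: bk_nonneg nn)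
qed

theorem mainTheorem15:
  fixes \<epsilon> \<theta> D :: real
  assumes "0 < \<epsilon>" "\<epsilon> < 1" "0 < \<theta>" "\<theta> < 1" "0 \<le> D"
  shows "\<exists>\<rho>0 > 0. \<forall>d \<rho>. \<bar>d\<bar> \<le> D \<longrightarrow> \<rho> \<ge> \<rho>0 \<longrightarrow> (\<forall>x :: 'a :: euclidean_space.
           integrable lborel (\<lambda>y. bessel_kernel (x - y) * (\<rho> + (norm y)\<^sup>2) powr (d / 2)) \<and>
           \<epsilon> * (\<rho> + (norm x)\<^sup>2) powr (d / 2) \<le> bessel_op (\<lambda>y. (\<rho> + (norm y)\<^sup>2) powr (d / 2)) x \<and>
           bessel_op (\<lambda>y. (\<rho> + (norm y)\<^sup>2) powr (d / 2)) x \<le> (1 / \<theta>) * (\<rho> + (norm x)\<^sup>2) powr (d / 2))"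
proof -
  define M where "M = enn2real (\<integral>\<^sup>+ z. ennreal (bessel_kernel (z::'a) * exp (norm z / 4)) \<partial>lborel)"
  have M0: "M \<ge> 0" unfolding M_def by simp
  define \<delta> where "\<delta> = min (1 - \<epsilon>) (1 / \<theta> - 1)"
  have \<delta>0: "\<delta> > 0" unfolding \<delta>_def using assms by (simp add: field_simps)
  have \<delta>1: "\<delta> \<le> 1 - \<epsilon>" and \<delta>2: "\<delta> \<le> 1 / \<theta> - 1" unfolding \<delta>_def by simp_all
  define A where "A = 8 * D * (M + 1) / \<delta> + 8 * D + 1"
  have A1: "A \<ge> 1" unfolding A_def using assms M0 \<delta>0 by simp
  have AD: "A \<ge> 8 * D * (M + 1) / \<delta>" and AD2: "A \<ge> 8 * D" unfolding A_def using assms M0 \<delta>0 by simp_all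
  show ?thesis
  proof (intro exI[of _ "A\<^sup>2"] conjI allI impI)
    show "A\<^sup>2 > 0" using A1 by simp
    fix d \<rho> :: real and x :: 'a
    assume d: "\<bar>d\<bar> \<le> D" and \<rho>: "A\<^sup>2 \<le> \<rho>"
    have \<rho>0: "\<rho> > 0" using \<rho> A1 by (smt (verit) one_le_power)
    have sA: "A \<le> sqrt \<rho>" using real_sqrt_le_mono[OF \<rho>] A1 by simp
    have sr: "sqrt \<rho> > 0" using \<rho>0 by simp
    have D8: "8 * D \<le> sqrt \<rho>" using sA AD2 by linarith
    define c0 where "c0 = 8 * D / sqrt \<rho>"
    have c00: "c0 \<ge> 0" unfolding c0_def using assms sr by simp
    have c0M: "c0 * M \<le> \<delta>"
    proof -
      have "8 * D * (M + 1) / \<delta> \<le> sqrt \<rho>" using AD sA by linarith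
      then have "8 * D * (M + 1) \<le> \<delta> * sqrt \<rho>" using \<delta>0 by (simp add: divide_le_eq mult.commute)
      moreover have "8 * D * M \<le> 8 * D * (M + 1)" using assms(5) by (simp add: algebra_simps)
      ultimately have "8 * D * M \<le> \<delta> * sqrt \<rho>" by linarith
      then show ?thesis unfolding c0_def using sr by (simp add: field_simps)
    qed
    define F where "F = (\<lambda>y::'a. (\<rho> + (norm y)\<^sup>2) powr (d / 2))"
    define Fx where "Fx = F x"
    have "\<rho> + (norm x)\<^sup>2 > 0" using \<rho>0 by (simp add: add_pos_nonneg)
    then have Fx0: "Fx > 0" unfolding Fx_def F_def by simp
    have F0: "F y \<ge> 0" for y unfolding F_def by simp
    define E where "E = (\<lambda>y::'a. bessel_kernel (x - y) * exp (norm (x - y) / 4))"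
    define Bx where "Bx = (\<lambda>y::'a. bessel_kernel (x - y))"
    have iB: "integrable lborel Bx" and IB: "(\<integral>y. Bx y \<partial>lborel) = 1"
      unfolding Bx_def using bx1 by auto
    have iE: "integrable lborel E" and IE: "(\<integral>y. E y \<partial>lborel) = M"
      unfolding E_def M_def using bx2 by auto
    define gu where "gu = (\<lambda>y. Fx * Bx y + (Fx * c0) * E y)"
    define gl where "gl = (\<lambda>y. Fx * Bx y - (Fx * c0) * E y)"
    have igu: "integrable lborel gu" unfolding gu_def using iB iE by simp
    have igl: "integrable lborel gl" unfolding gl_def using iB iE by simp
    have Igu: "(\<integral>y. gu y \<partial>lborel) = Fx + Fx * c0 * M"
      unfolding gu_def using iB iE IB IE by simp
    have Igl: "(\<integral>y. gl y \<partial>lborel) = Fx - Fx * c0 * M"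
      unfolding gl_def using iB iE IB IE by simp
    have up: "Bx y * F y \<le> gu y" for y
    proof -
      have "F y \<le> Fx * (1 + c0 * exp (norm (x - y) / 4))"
        unfolding F_def Fx_def c0_def using pt_bound(1)[OF \<rho>0 d D8] by simp
      then have "Bx y * F y \<le> Bx y * (Fx * (1 + c0 * exp (norm (x - y) / 4)))"
        unfolding Bx_def by (intro mult_left_mono bk_nonneg)
      then show ?thesis unfolding gu_def E_def Bx_def by (simp add: algebra_simps)
    qed
    have lo: "gl y \<le> Bx y * F y" for y
    proof -
      have "Fx * (1 - c0 * exp (norm (x - y) / 4)) \<le> F y"
        unfolding F_def Fx_def c0_def using pt_bound(2)[OF \<rho>0 d D8] by simp
      then have "Bx y * (Fx * (1 - c0 * exp (norm (x - y) / 4))) \<le> Bx y * F y"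
        unfolding Bx_def by (intro mult_left_mono bk_nonneg)
      then show ?thesis unfolding gl_def E_def Bx_def by (simp add: algebra_simps)
    qed
    have mBF: "(\<lambda>y. Bx y * F y) \<in> borel_measurable lborel"
      unfolding Bx_def F_def by measurable
    have iBF: "integrable lborel (\<lambda>y. Bx y * F y)"
    proof (rule Bochner_Integration.integrable_bound[OF igu mBF])
      show "AE y in lborel. norm (Bx y * F y) \<le> norm (gu y)"
      proof (rule AE_I2)
        fix y
        have "0 \<le> Bx y * F y" unfolding Bx_def using bk_nonneg[of "x - y"] F0[of y] by simp
        then show "norm (Bx y * F y) \<le> norm (gu y)" using up[of y] by simp
      qed
    qed
    have op: "bessel_op F x = (\<integral>y. Bx y * F y \<partial>lborel)"
      unfolding bessel_op_def Bx_def ..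
    have "Fx - Fx * c0 * M \<le> bessel_op F x"
      unfolding op Igl[symmetric] by (rule integral_mono[OF igl iBF lo])
    moreover have "bessel_op F x \<le> Fx + Fx * c0 * M"
      unfolding op Igu[symmetric] by (rule integral_mono[OF iBF igu up])
    moreover have "\<epsilon> * Fx \<le> Fx - Fx * c0 * M"
    proof -
      have "Fx * (c0 * M) \<le> Fx * (1 - \<epsilon>)" using c0M \<delta>1 Fx0 by (intro mult_left_mono) auto
      then show ?thesis by (simp add: algebra_simps)
    qed
    moreover have "Fx + Fx * c0 * M \<le> (1 / \<theta>) * Fx"
    proof -
      have "Fx * (c0 * M) \<le> Fx * (1 / \<theta> - 1)" using c0M \<delta>2 Fx0 by (intro mult_left_mono) auto
      then show ?thesis by (simp add: algebra_simps)
    qed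
    ultimately show "integrable lborel (\<lambda>y. bessel_kernel (x - y) * (\<rho> + (norm y)\<^sup>2) powr (d / 2))"
      and "\<epsilon> * (\<rho> + (norm x)\<^sup>2) powr (d / 2) \<le> bessel_op (\<lambda>y. (\<rho> + (norm y)\<^sup>2) powr (d / 2)) x"
      and "bessel_op (\<lambda>y. (\<rho> + (norm y)\<^sup>2) powr (d / 2)) x \<le> (1 / \<theta>) * (\<rho> + (norm x)\<^sup>2) powr (d / 2)"
      using iBF unfolding F_def Fx_def Bx_def by auto
  qed
qed
end
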